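(* Let $F_1,F_2:X\rightrightarrows Y$ be upper $K$-convex set-valued maps whose values are all $K$-sequentially compact. Suppose that $F_1$ (or $F_2$) is continuous at some point of $X$, or that $X$ is finite dimensional. Then for every $\bar x\in X$ and every $y^*\in K^+\setminus\{0\}$, $$y^*\big(\widehat\partial(F_1+F_2)(\bar x)\big)\subset\widehat\partial(y^*\circ F_1)(\bar x)+\widehat\partial(y^*\circ F_2)(\bar x).$$
   Context: $X,Y$ are real normed spaces with duals $X^*,Y^*$; $B(X,Y)$ is the space of bounded linear operators $X\to Y$; $B(x,\delta)$ is the open ball and $D_Y$ the closed unit ball. $K\subset Y$ is a pointed closed convex cone and $K^+=\{y^*\in Y^*: y^*(k)\ge0\ \forall k\in K\}$. All set-valued maps have nonempty values; $(F_1+F_2)(x)=F_1(x)+F_2(x)$. For $F:X\rightrightarrows Y$ and $\bar x\in X$, $\widehat\partial F(\bar x)$ is the set of all $T\in B(X,Y)$ such that for every $\varepsilon>0$ there is $\delta>0$ with $F(x)+K\subset F(\bar x)+K+T(x-\bar x)+\varepsilon\|x-\bar x\|D_Y$ for all $x\in B(\bar x,\delta)$; this is also applied to maps $G:X\rightrightarrows\mathbb R$ with $Y=\mathbb R$, $K=[0,\infty)$ (so $\widehat\partial G(\bar x)\subset X^*$). For $y^*\in Y^*$, $y^*\circ F$ is $x\mapsto\{y^*(y):y\in F(x)\}$, and for $\mathcal T\subset B(X,Y)$, $y^*(\mathcal T)=\{y^*\circ T:T\in\mathcal T\}$. $F$ is upper $K$-convex if $\lambda F(x)+(1-\lambda)F(y)\subset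 F(\lambda x+(1-\lambda)y)+K$ for all $x,y\in X$, $\lambda\in(0,1)$. A nonempty $A\subset Y$ is $K$-sequentially compact if for every $(a_n)\subset A$ there is $(c_n)\subset K$ such that $(a_n-c_n)$ has a subsequence converging to an element of $A$. $F$ is continuous at $x$ if it is both lower continuous (for every open $V$ with $F(x)\cap V\ne\emptyset$ there is a neighborhood $U$ of $x$ with $F(u)\cap V\neq\emptyset$ for $u\in U$) and upper continuous (for every open $V\supset F(x)$ there is a neighborhood $U$ of $x$ with $F(u)\subset V$ for $u\in U$) at $x$. *)

theory Defs
  imports "HOL-Analysis.Analysis"
begin

definition pointed_closed_convex_cone :: "'b::real_normed_vector set \<Rightarrow> bool" where
  "pointed_closed_convex_cone K \<longleftrightarrow> closed K \<and> convex K \<and> cone K \<and> K \<inter> uminus ` K = {0}"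

definition dual_cone :: "'b::real_normed_vector set \<Rightarrow> ('b \<Rightarrow> real) set" where
  "dual_cone K = {ys. bounded_linear ys \<and> (\<forall>k\<in>K. ys k \<ge> 0)}"

(* Frechet-type subdifferential of a set-valued map w.r.t. the cone K *)
definition subdiff :: "'b::real_normed_vector set \<Rightarrow> ('a::real_normed_vector \<Rightarrow> 'b set) \<Rightarrow> 'a \<Rightarrow> ('a \<Rightarrow> 'b) set" where
  "subdiff K F xb = {T. bounded_linear T \<and>
     (\<forall>\<epsilon>>0. \<exists>\<delta>>0. \<forall>x\<in>ball xb \<delta>.
        {a + k | a k. a \<in> F x \<and> k \<in> K} \<subseteq>
        {b + k + T (x - xb) + d | b k d. b \<in> F xb \<and> k \<in> K \<and> norm d \<le> \<epsilon> * norm (x - xb)})}"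

definition scal_comp :: "('b \<Rightarrow> real) \<Rightarrow> ('a \<Rightarrow> 'b set) \<Rightarrow> 'a \<Rightarrow> real set" where
  "scal_comp ys F = (\<lambda>x. ys ` F x)"

definition upper_K_convex :: "'b::real_vector set \<Rightarrow> ('a::real_vector \<Rightarrow> 'b set) \<Rightarrow> bool" where
  "upper_K_convex K F \<longleftrightarrow> (\<forall>x y. \<forall>l::real. 0 < l \<and> l < 1 \<longrightarrow>
     {l *\<^sub>R a + (1 - l) *\<^sub>R b | a b. a \<in> F x \<and> b \<in> F y} \<subseteq>
     {c + k | c k. c \<in> F (l *\<^sub>R x + (1 - l) *\<^sub>R y) \<and> k \<in> K})"

definition K_seq_compact :: "'b::real_normed_vector set \<Rightarrow> 'b set \<Rightarrow> bool" where
  "K_seq_compact K A \<longleftrightarrow> A \<noteq> {} \<and> (\<forall>a::nat \<Rightarrow> 'b. (\<forall>n. a n \<in> A) \<longrightarrow>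
     (\<exists>c::nat \<Rightarrow> 'b. (\<forall>n. c n \<in> K) \<and> (\<exists>r l. strict_mono r \<and> l \<in> A \<and>
        ((\<lambda>n. a (r n) - c (r n)) \<longlonglongrightarrow> l))))"

definition lower_continuous_at :: "('a::topological_space \<Rightarrow> 'b::topological_space set) \<Rightarrow> 'a \<Rightarrow> bool" where
  "lower_continuous_at F x \<longleftrightarrow> (\<forall>V. open V \<and> F x \<inter> V \<noteq> {} \<longrightarrow>
     (\<exists>U. open U \<and> x \<in> U \<and> (\<forall>u\<in>U. F u \<inter> V \<noteq> {})))"

definition upper_continuous_at :: "('a::topological_space \<Rightarrow> 'b::topological_space set) \<Rightarrow> 'a \<Rightarrow> bool" where
  "upper_continuous_at F x \<longleftrightarrow> (\<forall>V. open V \<and> F x \<subseteq> V \<longrightarrow>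
     (\<exists>U. open U \<and> x \<in> U \<and> (\<forall>u\<in>U. F u \<subseteq> V)))"

definition sv_continuous_at :: "('a::topological_space \<Rightarrow> 'b::topological_space set) \<Rightarrow> 'a \<Rightarrow> bool" where
  "sv_continuous_at F x \<longleftrightarrow> lower_continuous_at F x \<and> upper_continuous_at F x"

definition finite_dim_space :: "'a::real_vector itself \<Rightarrow> bool" where
  "finite_dim_space _ \<longleftrightarrow> (\<exists>B::'a set. finite B \<and> span B = UNIV)"

end

theory Submission
  imports Defs
begin


definition goodG :: "('a::real_vector \<Rightarrow> real) \<Rightarrow> ('a \<times> real) set \<Rightarrow> bool" where
 "goodG q G \<longleftrightarrow> (0,0) \<in> G \<and> (\<forall>x a y b. (x,a)\<in>G \<longrightarrow> (y,b)\<in>G \<longrightarrow> (x+y,a+b)\<in>G)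
     \<and> (\<forall>x a c. (x,a)\<in>G \<longrightarrow> (c *\<^sub>R x, c*a) \<in> G) \<and> (\<forall>x a. (x,a)\<in>G \<longrightarrow> a \<le> q x)"

lemma goodG_D:
  assumes "goodG q G"
  shows "(0,0)\<in>G" "\<And>x a y b. (x,a)\<in>G \<Longrightarrow> (y,b)\<in>G \<Longrightarrow> (x+y,a+b)\<in>G"
    "\<And>x a c. (x,a)\<in>G \<Longrightarrow> (c *\<^sub>R x, c*a) \<in> G" "\<And>x a. (x,a)\<in>G \<Longrightarrow> a \<le> q x"
  using assms unfolding goodG_def by blast+

lemma goodG_unique:
  assumes g: "goodG q G" and q0: "q 0 = 0" and "(x,a)\<in>G" "(x,b)\<in>G" shows "a = b"
proof -
  have "((-1) *\<^sub>R x, (-1)*b) \<in> G" using goodG_D(3)[OF g assms(4)] by blast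
  then have "(x + (-1) *\<^sub>R x, a + (-1)*b) \<in> G" using goodG_D(2)[OF g assms(3)] by blast
  then have 1: "(0, a - b) \<in> G" by simp
  then have "((-1) *\<^sub>R 0, (-1)*(a-b)) \<in> G" using goodG_D(3)[OF g] by blast
  then have 2: "(0, b - a) \<in> G" by simp
  have "a - b \<le> q 0" using goodG_D(4)[OF g 1] .
  moreover have "b - a \<le> q 0" using goodG_D(4)[OF g 2] .
  ultimately show ?thesis using q0 by simp
qed

lemma goodG_chain:
  assumes C: "C \<in> chains {G. goodG q G}" and q0: "q 0 = 0"
  shows "goodG q (insert (0,0) (\<Union>C))"
proof -
  have gC: "\<And>G. G \<in> C \<Longrightarrow> goodG q G" using C chainsD2 by blast
  have add: "(x+y,a+b) \<in> insert (0,0) (\<Union>C)" if ha: "(x,a) \<in> insert (0,0) (\<Union>C)" and hb: "(y,b) \<in> insert (0,0) (\<Union>C)" for x a y b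
  proof -
    have 1: "\<exists>G\<in>C. (x,a)\<in>G \<and> (y,b) \<in> G" if h1: "(x,a)\<in>\<Union>C" and h2: "(y,b)\<in>\<Union>C"
    proof -
      obtain G1 G2 where "G1\<in>C" "G2 \<in> C" "(x,a)\<in>G1" "(y,b)\<in>G2" using h1 h2 by blast
      then show ?thesis using chainsD[OF C, of G1 G2] by blast
    qed
    show ?thesis
    proof (cases "(x,a) = (0,0)")
      case True then show ?thesis using hb by simp
    next
      case F1: False
      show ?thesis
      proof (cases "(y,b) = (0,0)")
        case True then show ?thesis using ha by simp
      next
        case False
        then obtain G where G: "G\<in>C" "(x,a)\<in>G" "(y,b)\<in>G" using F1 ha hb 1 by blast
        then have "(x+y,a+b)\<in>G" using gC[OF G(1)] unfolding goodG_def by blast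
        then show ?thesis using G(1) by blast
      qed
    qed
  qed
  have sc: "(c *\<^sub>R x, c*a) \<in> insert (0,0) (\<Union>C)" if hh: "(x,a) \<in> insert (0,0) (\<Union>C)" for x a c
  proof (cases "(x,a) = (0,0)")
    case True then show ?thesis by simp
  next
    case False
    then obtain G where "G \<in> C" "(x,a) \<in> G" using hh by blast
    then have "(c *\<^sub>R x, c*a) \<in> G" using gC unfolding goodG_def by blast
    then show ?thesis using \<open>G \<in> C\<close> by blast
  qed
  have le: "a \<le> q x" if hl: "(x,a) \<in> insert (0,0) (\<Union>C)" for x a
  proof (cases "(x,a) = (0,0)")
    case True then show ?thesis using q0 by simp
  next
    case False
    then obtain G where "G \<in> C" "(x,a) \<in> G" using hl by blast
    then show ?thesis using goodG_D(4)[OF gC] by blast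
  qed
  show ?thesis unfolding goodG_def using add sc le by blast
qed

lemma goodG_extend:
  fixes q :: "'a::real_vector \<Rightarrow> real"
  assumes g: "goodG q M" and sub: "\<And>x y. q (x + y) \<le> q x + q y"
    and hom: "\<And>t x. t \<ge> 0 \<Longrightarrow> q (t *\<^sub>R x) = t * q x"
    and nx: "\<forall>a. (x0,a) \<notin> M"
  shows "\<exists>M'. goodG q M' \<and> M \<subseteq> M' \<and> M' \<noteq> M"
proof -
  have q0: "q 0 = 0" using hom[of 0 0] by simp
  note g0 = goodG_D(1)[OF g] and gadd = goodG_D(2)[OF g] and gsc = goodG_D(3)[OF g] and gle = goodG_D(4)[OF g]
  let ?S = "{b - q (y - x0) | y b. (y,b) \<in> M}"
  have Sne: "?S \<noteq> {}" using g0 by blast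
  have key: "b1 - q (y1 - x0) \<le> q (y2 + x0) - b2" if "(y1,b1)\<in>M" "(y2,b2)\<in>M" for y1 b1 y2 b2
  proof -
    have "(y1+y2,b1+b2)\<in>M" using gadd that by blast
    then have "b1 + b2 \<le> q (y1+y2)" by (rule gle)
    also have "\<dots> \<le> q (y1 - x0) + q (y2 + x0)" using sub[of "y1 - x0" "y2 + x0"] by simp
    finally show ?thesis by simp
  qed
  have Sbdd: "bdd_above ?S"
    using key[of _ _ 0 0] g0 unfolding bdd_above_def by blast
  define c where "c = Sup ?S"
  have c_ge: "b - q (y - x0) \<le> c" if "(y,b)\<in>M" for y b
    unfolding c_def using that Sbdd by (intro cSup_upper) blast+
  have c_le: "c \<le> q (y + x0) - b" if "(y,b)\<in>M" for y b
    unfolding c_def using that Sne key by (intro cSup_least) blast+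
  define M' where "M' = {(y + t *\<^sub>R x0, b + t * c) | y b t. (y,b) \<in> M}"
  have dom: "b + t * c \<le> q (y + t *\<^sub>R x0)" if "(y,b)\<in>M" for y b t
  proof (cases "t = 0")
    case True then show ?thesis using gle[OF that] by simp
  next
    case False
    show ?thesis
    proof (cases "t > 0")
      case True
      have "((1/t) *\<^sub>R y, (1/t)*b) \<in> M" using gsc that by blast
      from c_le[OF this] have "c \<le> q ((1/t) *\<^sub>R y + x0) - b/t" by simp
      then have "t*c \<le> t * q ((1/t) *\<^sub>R y + x0) - b" using True by (simp add: field_simps)
      also have "t * q ((1/t) *\<^sub>R y + x0) = q (t *\<^sub>R ((1/t) *\<^sub>R y + x0))" using hom True by simp
      also have "t *\<^sub>R ((1/t) *\<^sub>R y + x0) = y + t *\<^sub>R x0" using True by (simp add: scaleR_add_right)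
      finally show ?thesis by simp
    next
      case False2: False
      define s where "s = - t"
      have s: "s > 0" using False False2 s_def by simp
      have "((1/s) *\<^sub>R y, (1/s)*b) \<in> M" using gsc that by blast
      from c_ge[OF this] have "b/s - q ((1/s) *\<^sub>R y - x0) \<le> c" by simp
      then have "b - s * q ((1/s) *\<^sub>R y - x0) \<le> s*c" using s by (simp add: field_simps)
      also have "s * q ((1/s) *\<^sub>R y - x0) = q (s *\<^sub>R ((1/s) *\<^sub>R y - x0))" using hom s by simp
      also have "s *\<^sub>R ((1/s) *\<^sub>R y - x0) = y + t *\<^sub>R x0" using s s_def by (simp add: scaleR_diff_right)
      finally show ?thesis using s_def by simp
    qed
  qed
  have "goodG q M'"
    unfolding goodG_def
  proof (intro conjI allI impI)
    have "(0,0) \<in> M" using g0 by blast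
    then show "(0,0) \<in> M'" unfolding M'_def by (auto intro!: exI[of _ 0])
  next
    fix x a y b assume "(x,a)\<in>M'" "(y,b)\<in>M'"
    then obtain y1 b1 t1 y2 b2 t2 where "(y1,b1)\<in>M" "(y2,b2)\<in>M" "x = y1 + t1 *\<^sub>R x0" "a = b1 + t1*c"
      "y = y2 + t2 *\<^sub>R x0" "b = b2 + t2*c" unfolding M'_def by blast
    moreover have "(y1+y2,b1+b2)\<in>M" using gadd calculation by blast
    ultimately show "(x+y,a+b)\<in>M'" unfolding M'_def
      by (intro CollectI exI[of _ "y1+y2"] exI[of _ "b1+b2"] exI[of _ "t1+t2"]) (auto simp: algebra_simps)
  next
    fix x a c' assume "(x,a)\<in>M'"
    then obtain y1 b1 t1 where "(y1,b1)\<in>M" "x = y1 + t1 *\<^sub>R x0" "a = b1 + t1*c" unfolding M'_def by blast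
    moreover have "(c' *\<^sub>R y1, c'*b1)\<in>M" using gsc calculation by blast
    ultimately show "(c' *\<^sub>R x, c'*a)\<in>M'" unfolding M'_def
      by (intro CollectI exI[of _ "c' *\<^sub>R y1"] exI[of _ "c'*b1"] exI[of _ "c'*t1"]) (auto simp: algebra_simps)
  next
    fix x a assume "(x,a)\<in>M'"
    then show "a \<le> q x" unfolding M'_def using dom by blast
  qed
  moreover have "M \<subseteq> M'"
  proof
    fix z assume "z \<in> M"
    then obtain y b where zz: "z = (y,b)" "(y,b)\<in>M" by (cases z) auto
    then have "z = (y + 0 *\<^sub>R x0, b + 0*c) \<and> (y,b)\<in>M" by simp
    then show "z \<in> M'" unfolding M'_def by blast
  qed
  moreover have "(x0, c) \<in> M'"
  proof -
    have "(0,0)\<in>M" using g0 by blast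
    then have "(x0,c) = (0 + 1 *\<^sub>R x0, 0 + 1*c) \<and> (0,0)\<in>M" by simp
    then show ?thesis unfolding M'_def by blast
  qed
  ultimately show ?thesis using nx by blast
qed

lemma hahn_banach_alg:
  fixes q :: "'a::real_vector \<Rightarrow> real"
  assumes sub: "\<And>x y. q (x + y) \<le> q x + q y"
    and hom: "\<And>t x. t \<ge> 0 \<Longrightarrow> q (t *\<^sub>R x) = t * q x"
  shows "\<exists>l. linear l \<and> (\<forall>x. l x \<le> q x)"
proof -
  have q0: "q 0 = 0" using hom[of 0 0] by simp
  have "\<exists>M\<in>{G. goodG q G}. \<forall>X\<in>{G. goodG q G}. M \<subseteq> X \<longrightarrow> X = M"
  proof (rule Zorn_Lemma2, intro ballI)
    fix C assume "C \<in> chains {G. goodG q G}"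
    then have "goodG q (insert (0,0) (\<Union>C))" using goodG_chain q0 by blast
    then show "\<exists>U\<in>{G. goodG q G}. \<forall>X\<in>C. X \<subseteq> U" by (intro bexI[of _ "insert (0,0) (\<Union>C)"]) auto
  qed
  then obtain M where g: "goodG q M" and mx: "\<And>X. goodG q X \<Longrightarrow> M \<subseteq> X \<Longrightarrow> X = M" by blast
  have tot: "\<exists>a. (x,a)\<in>M" for x
  proof (rule ccontr)
    assume "\<not> (\<exists>a. (x,a)\<in>M)"
    then have "\<forall>a. (x,a)\<notin>M" by simp
    from goodG_extend[OF g sub hom this] obtain M' where "goodG q M'" "M \<subseteq> M'" "M' \<noteq> M" by blast
    with mx show False by blast
  qed
  define l where "l x = (THE a. (x,a)\<in>M)" for x
  have lM: "(x, l x) \<in> M" for x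
  proof -
    have "\<exists>!a. (x,a)\<in>M" using tot[of x] goodG_unique[OF g q0] by blast
    then show ?thesis unfolding l_def by (rule theI')
  qed
  have lu: "(x,a)\<in>M \<Longrightarrow> l x = a" for x a using goodG_unique[OF g q0] lM by blast
  have "linear l"
  proof (rule linearI)
    fix x y
    have "(x+y, l x + l y) \<in> M" using goodG_D(2)[OF g lM[of x] lM[of y]] .
    then show "l (x+y) = l x + l y" by (rule lu)
  next
    fix c x
    have "(c *\<^sub>R x, c * l x) \<in> M" using goodG_D(3)[OF g lM[of x]] .
    then show "l (c *\<^sub>R x) = c *\<^sub>R l x" using lu by simp
  qed
  moreover have "l x \<le> q x" for x using goodG_D(4)[OF g lM[of x]] .
  ultimately show ?thesis by blast
qed


lemma coef_bound:
  fixes b :: "'a::real_normed_vector"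
  assumes cl: "closed (span S)" and nb: "b \<notin> span S" and sx: "x - t *\<^sub>R b \<in> span S"
  shows "\<bar>t\<bar> * infdist b (span S) \<le> norm x"
proof (cases "t = 0")
  case True then show ?thesis by simp
next
  case False
  have m: "- ((1/t) *\<^sub>R (x - t *\<^sub>R b)) \<in> span S" using sx by (simp add: span_neg span_scale)
  have "infdist b (span S) \<le> dist b (- ((1/t) *\<^sub>R (x - t *\<^sub>R b)))" by (rule infdist_le[OF m])
  also have "dist b (- ((1/t) *\<^sub>R (x - t *\<^sub>R b))) = norm ((1/t) *\<^sub>R x)"
    using False by (simp add: dist_norm algebra_simps)
  also have "\<dots> = norm x / \<bar>t\<bar>" by simp
  finally show ?thesis using False by (simp add: field_simps)
qed

lemma closed_span_finite:
  fixes S :: "'a::real_normed_vector set"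
  assumes "finite S" shows "closed (span S)"
  using assms
proof (induction S rule: finite_induct)
  case empty then show ?case by simp
next
  case (insert b S)
  show ?case
  proof (cases "b \<in> span S")
    case True
    then have "span (insert b S) = span S" by (simp add: span_redundant)
    then show ?thesis using insert.IH by simp
  next
    case False
    define d where "d = infdist b (span S)"
    have ne: "span S \<noteq> {}" using span_zero by blast
    have d: "d > 0" unfolding d_def
      using infdist_pos_not_in_closed[OF insert.IH ne False] .
    show ?thesis
    proof (rule closed_sequential_limits[THEN iffD2], intro allI impI, elim conjE)
      fix xs l assume xs: "\<forall>n. xs n \<in> span (insert b S)" and lim: "xs \<longlonglongrightarrow> l"
      have "\<exists>t. xs n - t *\<^sub>R b \<in> span S" for n using xs span_breakdown_eq by blast
      then obtain t where t: "\<And>n. xs n - t n *\<^sub>R b \<in> span S" by metis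
      have tb: "\<bar>t m - t n\<bar> * d \<le> dist (xs m) (xs n)" for m n
      proof -
        have "(xs m - xs n) - (t m - t n) *\<^sub>R b = (xs m - t m *\<^sub>R b) - (xs n - t n *\<^sub>R b)"
          by (simp add: algebra_simps)
        also have "\<dots> \<in> span S" using t by (simp add: span_diff)
        finally show ?thesis unfolding d_def dist_norm
          by (rule coef_bound[OF insert.IH False])
      qed
      have "Cauchy xs" using lim by (rule LIMSEQ_imp_Cauchy)
      have "Cauchy t"
      proof (rule metric_CauchyI)
        fix e :: real assume "e > 0"
        have ed: "e * d > 0" using \<open>e > 0\<close> d by simp
        obtain M where M: "\<forall>m\<ge>M. \<forall>n\<ge>M. dist (xs m) (xs n) < e * d"
          using metric_CauchyD[OF \<open>Cauchy xs\<close> ed] by blast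
        show "\<exists>M. \<forall>m\<ge>M. \<forall>n\<ge>M. dist (t m) (t n) < e"
        proof (intro exI allI impI)
          fix m n assume "m \<ge> M" "n \<ge> M"
          then have "dist (xs m) (xs n) < e * d" using M by blast
          then have "\<bar>t m - t n\<bar> * d < e * d" using tb[of m n] by linarith
          then show "dist (t m) (t n) < e" using d by (simp add: dist_real_def)
        qed
      qed
      then obtain tl where tl: "t \<longlonglongrightarrow> tl" using Cauchy_convergent_iff convergent_def by blast
      have "(\<lambda>n. xs n - t n *\<^sub>R b) \<longlonglongrightarrow> l - tl *\<^sub>R b"
        by (intro tendsto_intros lim tl)
      moreover have "\<forall>n. xs n - t n *\<^sub>R b \<in> span S" using t by blast
      moreover have "\<forall>x l. (\<forall>n. x n \<in> span S) \<and> x \<longlonglongrightarrow> l \<longrightarrow> l \<in> span S"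
        using insert.IH closed_sequential_limits by blast
      ultimately have "l - tl *\<^sub>R b \<in> span S"
        by (metis (no_types, lifting))
      then show "l \<in> span (insert b S)" using span_breakdown_eq by blast
    qed
  qed
qed

lemma linear_bound_finite_span:
  fixes S :: "'a::real_normed_vector set" and f :: "'a \<Rightarrow> real"
  assumes "finite S" and lf: "linear f"
  shows "\<exists>C. \<forall>x\<in>span S. \<bar>f x\<bar> \<le> C * norm x"
  using assms(1)
proof (induction S rule: finite_induct)
  case empty then show ?case using linear_0[OF lf] by (auto intro: exI[of _ 0])
next
  case (insert b S)
  then obtain C where C: "\<And>x. x\<in>span S \<Longrightarrow> \<bar>f x\<bar> \<le> C * norm x" by blast
  show ?case
  proof (cases "b \<in> span S")
    case True
    then have "span (insert b S) = span S" by (simp add: span_redundant)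
    then show ?thesis using C by auto
  next
    case False
    define d where "d = infdist b (span S)"
    have cl: "closed (span S)" by (rule closed_span_finite[OF insert.hyps(1)])
    have ne: "span S \<noteq> {}" using span_zero by blast
    have d: "d > 0" unfolding d_def
      using infdist_pos_not_in_closed[OF cl ne False] .
    define C' where "C' = max C 0"
    have C': "\<And>x. x\<in>span S \<Longrightarrow> \<bar>f x\<bar> \<le> C' * norm x"
    proof -
      fix x assume "x \<in> span S"
      have "C * norm x \<le> C' * norm x" unfolding C'_def by (intro mult_right_mono) auto
      then show "\<bar>f x\<bar> \<le> C' * norm x" using C[OF \<open>x \<in> span S\<close>] by linarith
    qed
    have C'0: "C' \<ge> 0" unfolding C'_def by simp
    show ?thesis
    proof (intro exI ballI)
      fix x assume "x \<in> span (insert b S)"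
      then obtain t where t: "x - t *\<^sub>R b \<in> span S" using span_breakdown_eq by blast
      have tb: "\<bar>t\<bar> * d \<le> norm x" unfolding d_def by (rule coef_bound[OF cl False t])
      then have tb': "\<bar>t\<bar> \<le> norm x / d" using d by (simp add: field_simps)
      have ns: "norm (x - t *\<^sub>R b) \<le> norm x + \<bar>t\<bar> * norm b"
        using norm_triangle_ineq4[of x "t *\<^sub>R b"] by simp
      have "f x = f (x - t *\<^sub>R b) + t * f b"
        using lf by (simp add: linear_diff linear_scale)
      then have "\<bar>f x\<bar> \<le> \<bar>f (x - t *\<^sub>R b)\<bar> + \<bar>t\<bar> * \<bar>f b\<bar>"
        using abs_triangle_ineq[of "f (x - t *\<^sub>R b)" "t * f b"] by (simp add: abs_mult)
      also have "\<dots> \<le> C' * (norm x + \<bar>t\<bar> * norm b) + \<bar>t\<bar> * \<bar>f b\<bar>"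
        using C'[OF t] mult_left_mono[OF ns C'0] by linarith
      also have "\<dots> \<le> C' * (norm x + (norm x / d) * norm b) + (norm x / d) * \<bar>f b\<bar>"
        using tb' C'0
        by (intro add_mono mult_left_mono mult_right_mono order_refl) auto
      also have "\<dots> = (C' * (1 + norm b / d) + \<bar>f b\<bar> / d) * norm x"
        by (simp add: algebra_simps)
      finally show "\<bar>f x\<bar> \<le> (C' * (1 + norm b / d) + \<bar>f b\<bar> / d) * norm x" .
    qed
  qed
qed

lemma linear_bounded_findim:
  fixes f :: "'a::real_normed_vector \<Rightarrow> real" and B :: "'a set"
  assumes "finite B" "span B = UNIV" "linear f"
  shows "bounded_linear f"
proof -
  obtain C where C: "\<And>x. \<bar>f x\<bar> \<le> C * norm x"
    using linear_bound_finite_span[of B f] assms by auto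
  show ?thesis
    using assms(3) C unfolding bounded_linear_def bounded_linear_axioms_def
    by (metis mult.commute real_norm_def)
qed


definition cvx :: "('a::real_vector \<Rightarrow> real) \<Rightarrow> bool" where
  "cvx f \<longleftrightarrow> (\<forall>x y l. 0 \<le> l \<and> l \<le> 1 \<longrightarrow> f (l *\<^sub>R x + (1-l) *\<^sub>R y) \<le> l * f x + (1-l) * f y)"

lemma cvxD: "cvx f \<Longrightarrow> 0 \<le> l \<Longrightarrow> l \<le> 1 \<Longrightarrow> f (l *\<^sub>R x + (1-l) *\<^sub>R y) \<le> l * f x + (1-l) * f y"
  unfolding cvx_def by blast

lemma linear_bounded_above_ball:
  fixes l :: "'a::real_normed_vector \<Rightarrow> real"
  assumes lin: "linear l" and r: "r > 0" and M: "\<And>x. norm x < r \<Longrightarrow> l x \<le> M"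
  shows "bounded_linear l"
proof -
  have M0: "M \<ge> 0" using M[of 0] r linear_0[OF lin] by simp
  have bnd: "\<bar>l x\<bar> \<le> (2*M/r) * norm x" for x
  proof (cases "x = 0")
    case True then show ?thesis using linear_0[OF lin] by simp
  next
    case False
    define c where "c = r / (2 * norm x)"
    have c: "c > 0" using False r unfolding c_def by simp
    have ny: "norm (c *\<^sub>R x) < r" using False r unfolding c_def by simp
    have ny2: "norm (- (c *\<^sub>R x)) < r" using ny by simp
    have "l (c *\<^sub>R x) = c * l x" using lin by (simp add: linear_scale)
    moreover have "l (- (c *\<^sub>R x)) = - (c * l x)" using lin by (simp add: linear_neg linear_scale)
    ultimately have "c * \<bar>l x\<bar> \<le> M" using M[OF ny] M[OF ny2] c by (simp add: abs_if)
    then have "\<bar>l x\<bar> \<le> M / c" using c by (simp add: field_simps)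
    also have "M / c = (2*M/r) * norm x" unfolding c_def using r False by (simp add: field_simps)
    finally show ?thesis .
  qed
  show ?thesis
    using lin bnd unfolding bounded_linear_def bounded_linear_axioms_def
    by (metis mult.commute real_norm_def)
qed

lemma sandwich:
  fixes f g :: "'a::real_normed_vector \<Rightarrow> real"
  assumes cf: "cvx f" and cg: "cvx g" and f0: "f 0 = 0" and g0: "g 0 = 0"
    and fg: "\<And>x. f x + g x \<ge> 0"
    and bnd: "(\<exists>z r B. r > 0 \<and> (\<forall>x\<in>ball z r. f x \<le> B)) \<or> (\<exists>z r B. r > 0 \<and> (\<forall>x\<in>ball z r. g x \<le> B))
              \<or> (\<exists>B::'a set. finite B \<and> span B = UNIV)"
  shows "\<exists>l. bounded_linear l \<and> (\<forall>x. l x \<le> g x) \<and> (\<forall>x. - f x \<le> l x)"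
proof -
  define S where "S x = {(g u + f v) / t | t u v. t > 0 \<and> u - v = t *\<^sub>R x}" for x
  define q where "q x = Inf (S x)" for x
  have memS: "(g u + f v) / t \<in> S x" if "t > 0" "u - v = t *\<^sub>R x" for t u v x
    unfolding S_def using that by blast
  have Sne: "S x \<noteq> {}" for x using memS[of 1 x 0 x] by auto
  have lowb: "- g (- x) \<le> a" if aS: "a \<in> S x" for a x
  proof -
    obtain t u v where tuv: "t > 0" "u - v = t *\<^sub>R x" "a = (g u + f v) / t"
      using aS unfolding S_def by blast
    define al where "al = 1 / (1 + t)"
    have al: "0 \<le> al" "al \<le> 1" using tuv(1) unfolding al_def by auto
    have be: "1 - al = t / (1 + t)" unfolding al_def using tuv(1) by (simp add: field_simps)
    define z where "z = al *\<^sub>R u + (1 - al) *\<^sub>R (- x)"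
    have "u = v + t *\<^sub>R x" using tuv(2) by (simp add: algebra_simps)
    then have z2: "z = al *\<^sub>R v + (1 - al) *\<^sub>R 0"
      unfolding z_def be unfolding al_def using tuv(1)
      by (simp add: algebra_simps scaleR_add_right)
    have "g z \<le> al * g u + (1 - al) * g (- x)" unfolding z_def by (rule cvxD[OF cg al])
    moreover have "f z \<le> al * f v + (1 - al) * f 0" unfolding z2 by (rule cvxD[OF cf al])
    ultimately have "0 \<le> al * (g u + f v) + (1 - al) * g (- x)" using fg[of z] f0 by (simp add: algebra_simps)
    moreover have "al * (g u + f v) + (1 - al) * g (- x) = ((g u + f v) + t * g (- x)) / (1 + t)"
      unfolding be unfolding al_def using tuv(1) by (simp add: add_divide_distrib)
    ultimately have "0 \<le> ((g u + f v) + t * g (- x)) / (1 + t)" by simp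
    then have "0 \<le> (g u + f v) + t * g (- x)" using tuv(1) by (simp add: zero_le_divide_iff)
    moreover have "t * a = g u + f v" using tuv(1,3) by simp
    ultimately have "t * (- g (- x)) \<le> t * a" by (simp add: algebra_simps)
    then show ?thesis using tuv(1) mult_le_cancel_left_pos[of t "- g (- x)" a] by linarith
  qed
  have bdd: "bdd_below (S x)" for x using lowb unfolding bdd_below_def by blast
  have qle: "q x \<le> (g u + f v) / t" if "t > 0" "u - v = t *\<^sub>R x" for t u v x
    unfolding q_def by (rule cInf_lower[OF memS[OF that] bdd])
  have qg: "q x \<le> g x" for x using qle[of 1 x 0 x] f0 by simp
  have qf: "q (- x) \<le> f x" for x using qle[of 1 0 x "-x"] g0 by simp
  have q0: "q 0 = 0"
  proof -
    have "q 0 \<le> 0" using qg[of 0] g0 by simp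
    moreover have "0 \<le> q 0" unfolding q_def using lowb[of _ 0] g0 by (intro cInf_greatest Sne) simp
    ultimately show ?thesis by simp
  qed
  have hom_le: "q (s *\<^sub>R x) \<le> s * q x" if s: "s > 0" for s x
  proof -
    have "q (s *\<^sub>R x) / s \<le> a" if aS: "a \<in> S x" for a
    proof -
      obtain t u v where tuv: "t > 0" "u - v = t *\<^sub>R x" "a = (g u + f v) / t"
        using aS unfolding S_def by blast
      have "u - v = (t / s) *\<^sub>R (s *\<^sub>R x)" using tuv(2) s by simp
      from qle[OF _ this] have "q (s *\<^sub>R x) \<le> (g u + f v) / (t / s)" using tuv(1) s by simp
      also have "(g u + f v) / (t / s) = s * a" using tuv(1,3) s by simp
      finally have "q (s *\<^sub>R x) \<le> s * a" .
      then show ?thesis using s by (simp add: divide_le_eq mult.commute)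
    qed
    then have "q (s *\<^sub>R x) / s \<le> q x" unfolding q_def[of x] by (intro cInf_greatest Sne)
    then show ?thesis using s by (simp add: field_simps)
  qed
  have hom: "q (s *\<^sub>R x) = s * q x" if "s \<ge> 0" for s x
  proof (cases "s = 0")
    case True then show ?thesis using q0 by simp
  next
    case False
    then have s: "s > 0" using that by simp
    have "q x \<le> (1/s) * q (s *\<^sub>R x)" using hom_le[of "1/s" "s *\<^sub>R x"] s by simp
    then have "s * q x \<le> q (s *\<^sub>R x)" using s by (simp add: field_simps)
    then show ?thesis using hom_le[OF s, of x] by simp
  qed
  have sub: "q (x + y) \<le> q x + q y" for x y
  proof -
    have key: "q (x + y) \<le> a1 + a2" if a1: "a1 \<in> S x" and a2: "a2 \<in> S y" for a1 a2
    proof -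
      obtain t1 u1 v1 where 1: "t1 > 0" "u1 - v1 = t1 *\<^sub>R x" "a1 = (g u1 + f v1) / t1"
        using a1 unfolding S_def by blast
      obtain t2 u2 v2 where 2: "t2 > 0" "u2 - v2 = t2 *\<^sub>R y" "a2 = (g u2 + f v2) / t2"
        using a2 unfolding S_def by blast
      define la where "la = t2 / (t1 + t2)"
      define T where "T = t1 * t2 / (t1 + t2)"
      have la: "0 \<le> la" "la \<le> 1" using 1 2 unfolding la_def by auto
      have T: "T > 0" using 1 2 unfolding T_def by simp
      have lt1: "la * t1 = T" unfolding la_def T_def by simp
      have lt2: "(1 - la) * t2 = T" unfolding la_def T_def using 1 2 by (simp add: field_simps)
      define u where "u = la *\<^sub>R u1 + (1 - la) *\<^sub>R u2"
      define v where "v = la *\<^sub>R v1 + (1 - la) *\<^sub>R v2"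
      have "u - v = la *\<^sub>R (u1 - v1) + (1 - la) *\<^sub>R (u2 - v2)"
        unfolding u_def v_def by (simp add: algebra_simps)
      also have "\<dots> = (la * t1) *\<^sub>R x + ((1 - la) * t2) *\<^sub>R y" using 1 2 by simp
      also have "\<dots> = T *\<^sub>R (x + y)" using lt1 lt2 by (simp add: scaleR_add_right)
      finally have uv: "u - v = T *\<^sub>R (x + y)" .
      have "g u + f v \<le> la * (g u1 + f v1) + (1 - la) * (g u2 + f v2)"
        using cvxD[OF cg la, of u1 u2] cvxD[OF cf la, of v1 v2] unfolding u_def v_def
        by (simp add: algebra_simps)
      then have "(g u + f v) / T \<le> (la * (g u1 + f v1) + (1 - la) * (g u2 + f v2)) / T"
        using T by (simp add: divide_right_mono)
      also have "\<dots> = (la / T) * (g u1 + f v1) + ((1 - la) / T) * (g u2 + f v2)"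
        by (simp add: add_divide_distrib)
      also have "la / T = 1 / t1" using lt1 1 T by (simp add: field_simps)
      also have "(1 - la) / T = 1 / t2" using lt2 2 T by (simp add: field_simps)
      finally have "(g u + f v) / T \<le> a1 + a2" using 1 2 by simp
      then show ?thesis using qle[OF T uv] by simp
    qed
    have "q (x + y) - q y \<le> a1" if "a1 \<in> S x" for a1
    proof -
      have "q (x + y) - a1 \<le> a2" if "a2 \<in> S y" for a2 using key[OF \<open>a1 \<in> S x\<close> that] by simp
      then have "q (x + y) - a1 \<le> q y" unfolding q_def[of y] by (intro cInf_greatest Sne)
      then show ?thesis by simp
    qed
    then have "q (x + y) - q y \<le> q x" unfolding q_def[of x] by (intro cInf_greatest Sne)
    then show ?thesis by simp
  qed
  obtain l where lin: "linear l" and lq: "\<And>x. l x \<le> q x"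
    using hahn_banach_alg[of q, OF sub hom] by blast
  have lg: "l x \<le> g x" for x using lq[of x] qg[of x] by simp
  have lf: "- f x \<le> l x" for x
  proof -
    have "l (- x) \<le> f x" using lq[of "-x"] qf[of x] by simp
    then show ?thesis using lin by (simp add: linear_neg)
  qed
  have "bounded_linear l"
    using bnd
  proof (elim disjE exE conjE)
    fix z r B assume r: "r > 0" and B: "\<forall>x\<in>ball z r. f x \<le> B"
    show ?thesis
    proof (rule linear_bounded_above_ball[OF lin r])
      fix x :: 'a assume "norm x < r"
      then have "z - x \<in> ball z r" by (simp add: dist_norm)
      then have "f (z - x) \<le> B" using B by blast
      moreover have "l x \<le> (g z + f (z - x)) / 1" by (rule order_trans[OF lq qle]) auto
      ultimately show "l x \<le> g z + B" by simp
    qed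
  next
    fix z r B assume r: "r > 0" and B: "\<forall>x\<in>ball z r. g x \<le> B"
    show ?thesis
    proof (rule linear_bounded_above_ball[OF lin r])
      fix x :: 'a assume "norm x < r"
      then have "z + x \<in> ball z r" by (simp add: dist_norm)
      then have "g (z + x) \<le> B" using B by blast
      moreover have "l x \<le> (g (z + x) + f z) / 1" by (rule order_trans[OF lq qle]) auto
      ultimately show "l x \<le> B + f z" by simp
    qed
  next
    fix Bs :: "'a set" assume "finite Bs" "span Bs = UNIV"
    then show ?thesis using linear_bounded_findim lin by blast
  qed
  then show ?thesis using lg lf by blast
qed


lemma ksc_lim:
  fixes ys :: "'b::real_normed_vector \<Rightarrow> real" and a :: "nat \<Rightarrow> 'b"
  assumes ys: "bounded_linear ys" and pos: "\<forall>k\<in>K. ys k \<ge> 0"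
    and A: "K_seq_compact K A" and a: "\<And>n. a n \<in> A"
  shows "\<exists>l\<in>A. \<exists>r::nat\<Rightarrow>nat. strict_mono r \<and> (\<forall>e>0. \<exists>N::nat. \<forall>n\<ge>N. ys l \<le> ys (a (r n)) + e)"
proof -
  have aa: "\<forall>n. a n \<in> A" using a by simp
  have "\<exists>c. (\<forall>n. c n \<in> K) \<and> (\<exists>r l. strict_mono r \<and> l \<in> A \<and> ((\<lambda>n. a (r n) - c (r n)) \<longlonglongrightarrow> l))"
    by (rule mp[OF spec[OF conjunct2[OF A[unfolded K_seq_compact_def]], of a] aa])
  then obtain c r l where c: "\<And>n. c n \<in> K" and r: "strict_mono r" and l: "l \<in> A"
    and lim: "(\<lambda>n. a (r n) - c (r n)) \<longlonglongrightarrow> l"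
    by blast
  have lim2: "(\<lambda>n. ys (a (r n) - c (r n))) \<longlonglongrightarrow> ys l"
    using bounded_linear.tendsto[OF ys lim] .
  have "\<exists>N. \<forall>n\<ge>N. ys l \<le> ys (a (r n)) + e" if e: "e > 0" for e
  proof -
    obtain N where N: "\<And>n. n \<ge> N \<Longrightarrow> norm (ys (a (r n) - c (r n)) - ys l) < e"
      using LIMSEQ_D[OF lim2 e] by blast
    have "ys l \<le> ys (a (r n)) + e" if "n \<ge> N" for n
    proof -
      have "ys (a (r n) - c (r n)) = ys (a (r n)) - ys (c (r n))"
        using linear_diff[OF bounded_linear.linear[OF ys]] by simp
      moreover have "ys (c (r n)) \<ge> 0" using pos c by blast
      ultimately show ?thesis using N[OF that] unfolding real_norm_def by linarith
    qed
    then show ?thesis by blast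
  qed
  then show ?thesis using l r by blast
qed

lemma ksc_min:
  fixes ys :: "'b::real_normed_vector \<Rightarrow> real"
  assumes ys: "bounded_linear ys" and pos: "\<forall>k\<in>K. ys k \<ge> 0"
    and A: "K_seq_compact K A"
  shows "\<exists>a\<in>A. \<forall>b\<in>A. ys a \<le> ys b"
proof -
  have Ane: "A \<noteq> {}" using A unfolding K_seq_compact_def by blast
  have bdd: "bdd_below (ys ` A)"
  proof (rule ccontr)
    assume nb: "\<not> bdd_below (ys ` A)"
    have "\<exists>a. a \<in> A \<and> ys a < - real n" for n
    proof (rule ccontr)
      assume "\<not> (\<exists>a. a \<in> A \<and> ys a < - real n)"
      then have "\<And>a. a \<in> A \<Longrightarrow> - real n \<le> ys a" by force
      then have "bdd_below (ys ` A)" by (rule bdd_belowI2)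
      then show False using nb by simp
    qed
    then have "\<forall>n. \<exists>a. a \<in> A \<and> ys a < - real n" by blast
    from choice[OF this] obtain a where a: "\<forall>n. a n \<in> A \<and> ys (a n) < - real n" by blast
    have a1: "\<And>n. a n \<in> A" using a by blast
    have a2: "\<And>n. ys (a n) < - real n" using a by blast
    have "\<exists>l\<in>A. \<exists>r::nat\<Rightarrow>nat. strict_mono r \<and> (\<forall>e>0. \<exists>N::nat. \<forall>n\<ge>N. ys l \<le> ys (a (r n)) + e)"
      by (rule ksc_lim[OF ys pos A]) (rule a1)
    then obtain l r where l: "l \<in> A" "strict_mono r" and l3: "\<forall>e>0. \<exists>N::nat. \<forall>n\<ge>N. ys l \<le> ys (a (r n)) + e"
      by blast
    have "(1::real) > 0" by simp
    from l3[rule_format, OF this] obtain N where N: "\<And>n. n \<ge> N \<Longrightarrow> ys l \<le> ys (a (r n)) + 1" by blast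
    obtain n0 where n0: "\<bar>ys l\<bar> + 1 < real n0" using reals_Archimedean2 by blast
    define n where "n = max n0 N"
    have n: "n \<ge> N" "real n > \<bar>ys l\<bar> + 1" using n0 unfolding n_def by auto
    have "real n \<le> real (r n)" using seq_suble[OF l(2)] by simp
    then have "ys (a (r n)) < - real n" using a2[of "r n"] by linarith
    then show False using N[OF n(1)] n(2) by linarith
  qed
  define m where "m = Inf (ys ` A)"
  have ex: "\<exists>a. a \<in> A \<and> ys a < m + 1 / (real n + 1)" for n
  proof (rule ccontr)
    assume "\<not> (\<exists>a. a \<in> A \<and> ys a < m + 1 / (real n + 1))"
    then have "\<And>y. y \<in> ys ` A \<Longrightarrow> m + 1 / (real n + 1) \<le> y" by force
    then have "m + 1 / (real n + 1) \<le> m" unfolding m_def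
      by (intro cInf_greatest) (use Ane in simp_all)
    moreover have "1 / (real n + 1) > 0" by simp
    ultimately show False by linarith
  qed
  then have "\<forall>n. \<exists>a. a \<in> A \<and> ys a < m + 1 / (real n + 1)" by blast
  from choice[OF this] obtain a where a: "\<forall>n. a n \<in> A \<and> ys (a n) < m + 1 / (real n + 1)" by blast
  have a1: "\<And>n. a n \<in> A" using a by blast
  have a2: "\<And>n. ys (a n) < m + 1 / (real n + 1)" using a by blast
  have "\<exists>l\<in>A. \<exists>r::nat\<Rightarrow>nat. strict_mono r \<and> (\<forall>e>0. \<exists>N::nat. \<forall>n\<ge>N. ys l \<le> ys (a (r n)) + e)"
    by (rule ksc_lim[OF ys pos A]) (rule a1)
  then obtain l r where l: "l \<in> A" "strict_mono r" and l3: "\<forall>e>0. \<exists>N::nat. \<forall>n\<ge>N. ys l \<le> ys (a (r n)) + e"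
    by blast
  have "ys l \<le> m"
  proof (rule field_le_epsilon)
    fix e :: real assume e: "e > 0"
    have e2: "e/2 > 0" using e by simp
    from l3[rule_format, OF e2] obtain N where N: "\<And>n. n \<ge> N \<Longrightarrow> ys l \<le> ys (a (r n)) + e/2" by blast
    obtain n1 where n1: "2 / e < real n1" using reals_Archimedean2 by blast
    then have "2 < real n1 * e" using e by (simp add: divide_less_eq)
    then have "2 < (real n1 + 1) * e" using e by (simp add: algebra_simps)
    then have n0: "1 / (real n1 + 1) < e/2" by (simp add: divide_less_eq field_simps)
    define n where "n = max n1 N"
    have nN: "n \<ge> N" unfolding n_def by simp
    have "1 / (real n + 1) \<le> 1 / (real n1 + 1)" unfolding n_def
      by (intro divide_left_mono) auto
    then have n2: "1 / (real n + 1) < e/2" using n0 by linarith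
    have "real n \<le> real (r n)" using seq_suble[OF l(2)] by simp
    then have "1 / (real (r n) + 1) \<le> 1 / (real n + 1)" by (intro divide_left_mono) auto
    then show "ys l \<le> m + e" using N[OF nN] a2[of "r n"] n2 by linarith
  qed
  moreover have "m \<le> ys b" if "b \<in> A" for b
    unfolding m_def using that bdd by (intro cInf_lower) simp_all
  ultimately have "\<forall>b\<in>A. ys l \<le> ys b" by (meson order_trans)
  then show ?thesis using l(1) by blast
qed

lemma subdiff_real_intro:
  fixes G :: "'a::real_normed_vector \<Rightarrow> real set"
  assumes t: "bounded_linear t" and p: "p \<in> G xb" and ge: "\<And>x a. a \<in> G x \<Longrightarrow> p + t (x - xb) \<le> a"
  shows "t \<in> subdiff {0..} G xb"
  unfolding subdiff_def
proof (intro CollectI conjI t allI impI)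
  fix e :: real assume "e > 0"
  show "\<exists>\<delta>>0. \<forall>x\<in>ball xb \<delta>. {a + k |a k. a \<in> G x \<and> k \<in> {0..}} \<subseteq>
        {b + k + t (x - xb) + d |b k d. b \<in> G xb \<and> k \<in> {0..} \<and> norm d \<le> e * norm (x - xb)}"
  proof (intro exI[of _ 1] conjI ballI subsetI)
    fix x z assume "z \<in> {a + k |a k. a \<in> G x \<and> k \<in> {0..}}"
    then obtain a k where ak: "z = a + k" "a \<in> G x" "k \<ge> 0" by auto
    have "p + t (x - xb) \<le> a" using ge[OF ak(2)] .
    then have "z = p + (a + k - p - t (x - xb)) + t (x - xb) + 0 \<and> p \<in> G xb \<and> (a + k - p - t (x - xb)) \<in> {0..}
          \<and> norm (0::real) \<le> e * norm (x - xb)"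
      using ak p \<open>e > 0\<close> by auto
    then show "z \<in> {b + k + t (x - xb) + d |b k d. b \<in> G xb \<and> k \<in> {0..} \<and> norm d \<le> e * norm (x - xb)}"
      by blast
  qed simp
qed

lemma cvx_shift:
  assumes c: "cvx \<phi>" and L: "linear L"
  shows "cvx (\<lambda>y. \<phi> (xb + y) - c - L y)"
  unfolding cvx_def
proof (intro allI impI, elim conjE)
  fix x y and l :: real assume l: "0 \<le> l" "l \<le> 1"
  have e: "xb + (l *\<^sub>R x + (1 - l) *\<^sub>R y) = l *\<^sub>R (xb + x) + (1 - l) *\<^sub>R (xb + y)"
    by (simp add: algebra_simps)
  have "L (l *\<^sub>R x + (1 - l) *\<^sub>R y) = l * L x + (1 - l) * L y"
    using L by (simp add: linear_add linear_scale)
  then show "\<phi> (xb + (l *\<^sub>R x + (1 - l) *\<^sub>R y)) - c - L (l *\<^sub>R x + (1 - l) *\<^sub>R y)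
        \<le> l * (\<phi> (xb + x) - c - L x) + (1 - l) * (\<phi> (xb + y) - c - L y)"
    unfolding e using cvxD[OF c l, of "xb + x" "xb + y"] by (simp add: algebra_simps)
qed


lemma phi_cvx:
  fixes ys :: "'b::real_normed_vector \<Rightarrow> real" and F :: "'a::real_normed_vector \<Rightarrow> 'b set"
  assumes cv: "upper_K_convex K F" and ys: "linear ys" and pos: "\<forall>k\<in>K. ys k \<ge> 0"
    and mm: "\<And>x. m x \<in> F x" and mmin: "\<And>x b. b \<in> F x \<Longrightarrow> ys (m x) \<le> ys b"
  shows "cvx (\<lambda>x. ys (m x))"
  unfolding cvx_def
proof (intro allI impI, elim conjE)
  fix x y and l :: real assume l: "0 \<le> l" "l \<le> 1"
  show "ys (m (l *\<^sub>R x + (1 - l) *\<^sub>R y)) \<le> l * ys (m x) + (1 - l) * ys (m y)"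
  proof (cases "l = 0 \<or> l = 1")
    case True then show ?thesis by auto
  next
    case False
    then have l01: "0 < l \<and> l < 1" using l by auto
    have "l *\<^sub>R m x + (1 - l) *\<^sub>R m y \<in> {l *\<^sub>R a + (1 - l) *\<^sub>R b | a b. a \<in> F x \<and> b \<in> F y}"
      using mm by blast
    then have "l *\<^sub>R m x + (1 - l) *\<^sub>R m y \<in> {c + k | c k. c \<in> F (l *\<^sub>R x + (1 - l) *\<^sub>R y) \<and> k \<in> K}"
      using cv l01 unfolding upper_K_convex_def by blast
    then obtain c k where ck: "l *\<^sub>R m x + (1 - l) *\<^sub>R m y = c + k" "c \<in> F (l *\<^sub>R x + (1 - l) *\<^sub>R y)" "k \<in> K"
      by blast
    have "ys (l *\<^sub>R m x + (1 - l) *\<^sub>R m y) = l * ys (m x) + (1 - l) * ys (m y)"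
      using ys by (simp add: linear_add linear_scale)
    moreover have "ys (c + k) = ys c + ys k" using ys by (simp add: linear_add)
    moreover have "ys k \<ge> 0" using pos ck(3) by blast
    moreover have "ys (m (l *\<^sub>R x + (1 - l) *\<^sub>R y)) \<le> ys c" using mmin[OF ck(2)] .
    moreover have "ys (l *\<^sub>R m x + (1 - l) *\<^sub>R m y) = ys (c + k)" using ck(1) by simp
    ultimately show ?thesis by linarith
  qed
qed

lemma lsc_bound:
  fixes ys :: "'b::real_normed_vector \<Rightarrow> real" and F :: "'a::real_normed_vector \<Rightarrow> 'b set"
  assumes lc: "lower_continuous_at F x0" and ys: "bounded_linear ys"
    and mmin: "\<And>x b. b \<in> F x \<Longrightarrow> ys (m x) \<le> ys b" and ne: "F x0 \<noteq> {}"
  shows "\<exists>r>0. \<exists>B. \<forall>x\<in>ball x0 r. ys (m x) \<le> B"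
proof -
  obtain a where a: "a \<in> F x0" using ne by blast
  obtain Cy where Cy: "\<And>x. norm (ys x) \<le> norm x * Cy" "Cy > 0"
    using bounded_linear.pos_bounded[OF ys] by blast
  have ob: "open (ball a 1) \<and> F x0 \<inter> ball a 1 \<noteq> {}" using a by auto
  have "\<exists>U. open U \<and> x0 \<in> U \<and> (\<forall>u\<in>U. F u \<inter> ball a 1 \<noteq> {})"
    by (rule mp[OF spec[OF lc[unfolded lower_continuous_at_def], of "ball a 1"] ob])
  then obtain U where U: "open U" "x0 \<in> U" "\<And>u. u \<in> U \<Longrightarrow> F u \<inter> ball a 1 \<noteq> {}"
    by blast
  have "\<exists>e>0. ball x0 e \<subseteq> U" using open_contains_ball_eq[OF U(1)] U(2) by simp
  then obtain r where r: "r > 0" "ball x0 r \<subseteq> U" by blast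
  have "ys (m x) \<le> ys a + Cy" if x: "x \<in> ball x0 r" for x
  proof -
    have "x \<in> U" using r(2) x by blast
    then have "F x \<inter> ball a 1 \<noteq> {}" by (rule U(3))
    then obtain a' where a': "a' \<in> F x" "a' \<in> ball a 1" by blast
    have "ys a' = ys a + ys (a' - a)" using linear_diff[OF bounded_linear.linear[OF ys], of a' a] by simp
    also have "ys (a' - a) \<le> norm (a' - a) * Cy" using Cy(1)[of "a' - a"] by simp
    also have "norm (a' - a) * Cy \<le> 1 * Cy" using a'(2) Cy(2)
      by (intro mult_right_mono) (auto simp: dist_norm norm_minus_commute)
    finally have "ys a' \<le> ys a + Cy" by simp
    then show ?thesis using mmin[OF a'(1)] by linarith
  qed
  then show ?thesis using r(1) by blast
qed

theorem mainTheorem7: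
  fixes K :: "'b::real_normed_vector set"
    and F1 F2 :: "'a::real_normed_vector \<Rightarrow> 'b set"
  assumes K: "pointed_closed_convex_cone K"
    and ne1: "\<forall>x. F1 x \<noteq> {}" and ne2: "\<forall>x. F2 x \<noteq> {}"
    and cvx1: "upper_K_convex K F1" and cvx2: "upper_K_convex K F2"
    and cpt1: "\<forall>x. K_seq_compact K (F1 x)" and cpt2: "\<forall>x. K_seq_compact K (F2 x)"
    and reg: "(\<exists>x0. sv_continuous_at F1 x0) \<or> (\<exists>x0. sv_continuous_at F2 x0)
              \<or> finite_dim_space TYPE('a)"
  shows "\<forall>xb. \<forall>ys \<in> dual_cone K - {\<lambda>_. 0}.
           (\<lambda>T. ys \<circ> T) ` subdiff K (\<lambda>x. {a + b | a b. a \<in> F1 x \<and> b \<in> F2 x}) xb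
           \<subseteq> {(\<lambda>x. T1 x + T2 x) | T1 T2.
                 T1 \<in> subdiff {0..} (scal_comp ys F1) xb \<and>
                 T2 \<in> subdiff {0..} (scal_comp ys F2) xb}"
proof (intro allI ballI subsetI)
  fix xb ys Lf
  assume ysm: "ys \<in> dual_cone K - {\<lambda>_. 0}"
    and Lm: "Lf \<in> (\<lambda>T. ys \<circ> T) ` subdiff K (\<lambda>x. {a + b | a b. a \<in> F1 x \<and> b \<in> F2 x}) xb"
  obtain T where T: "T \<in> subdiff K (\<lambda>x. {a + b | a b. a \<in> F1 x \<and> b \<in> F2 x}) xb" and LT: "Lf = ys \<circ> T"
    using Lm by blast
  have ys: "bounded_linear ys" and pos: "\<forall>k\<in>K. ys k \<ge> 0" using ysm unfolding dual_cone_def by auto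
  have ysl: "linear ys" using ys by (rule bounded_linear.linear)
  define F where "F x = {a + b | a b. a \<in> F1 x \<and> b \<in> F2 x}" for x
  define LHS where "LHS x = {a + k | a k. a \<in> F x \<and> k \<in> K}" for x
  define RHS where "RHS x e = {b + k + T (x - xb) + d | b k d. b \<in> F xb \<and> k \<in> K \<and> norm d \<le> e * norm (x - xb)}" for x e
  have T': "T \<in> subdiff K F xb" using T unfolding F_def[abs_def] .
  have TT: "bounded_linear T \<and> (\<forall>e>0. \<exists>\<delta>>0. \<forall>x\<in>ball xb \<delta>. LHS x \<subseteq> RHS x e)"
    using T' unfolding subdiff_def LHS_def[abs_def] RHS_def[abs_def] by (rule CollectD)
  have Tb: "bounded_linear T" using TT by (rule conjunct1)
  have Tloc: "\<And>e. e > 0 \<Longrightarrow> \<exists>\<delta>>0. \<forall>x\<in>ball xb \<delta>. LHS x \<subseteq> RHS x e"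
    using TT by blast
  define L where "L x = ys (T x)" for x
  have Lb: "bounded_linear L" unfolding L_def using bounded_linear_compose[OF ys Tb] .
  have Ll: "linear L" using Lb by (rule bounded_linear.linear)
  have K0: "0 \<in> K" using K unfolding pointed_closed_convex_cone_def by blast
  have "\<forall>x. \<exists>a. a \<in> F1 x \<and> (\<forall>b\<in>F1 x. ys a \<le> ys b)" using ksc_min[OF ys pos] cpt1 by blast
  from choice[OF this] obtain m1 where m1: "\<forall>x. m1 x \<in> F1 x \<and> (\<forall>b\<in>F1 x. ys (m1 x) \<le> ys b)" by blast
  have "\<forall>x. \<exists>a. a \<in> F2 x \<and> (\<forall>b\<in>F2 x. ys a \<le> ys b)" using ksc_min[OF ys pos] cpt2 by blast
  from choice[OF this] obtain m2 where m2: "\<forall>x. m2 x \<in> F2 x \<and> (\<forall>b\<in>F2 x. ys (m2 x) \<le> ys b)" by blast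
  have m1i: "\<And>x. m1 x \<in> F1 x" and m1m: "\<And>x b. b \<in> F1 x \<Longrightarrow> ys (m1 x) \<le> ys b" using m1 by blast+
  have m2i: "\<And>x. m2 x \<in> F2 x" and m2m: "\<And>x b. b \<in> F2 x \<Longrightarrow> ys (m2 x) \<le> ys b" using m2 by blast+
  define p1 where "p1 x = ys (m1 x)" for x
  define p2 where "p2 x = ys (m2 x)" for x
  have c1: "cvx p1" unfolding p1_def by (rule phi_cvx[OF cvx1 ysl pos m1i m1m])
  have c2: "cvx p2" unfolding p2_def by (rule phi_cvx[OF cvx2 ysl pos m2i m2m])
  obtain Cy where Cy: "\<And>x. norm (ys x) \<le> norm x * Cy" "Cy > 0"
    using bounded_linear.pos_bounded[OF ys] by blast
  have loc: "\<exists>\<delta>>0. \<forall>x\<in>ball xb \<delta>. p1 xb + p2 xb + L (x - xb) - e * norm (x - xb) \<le> p1 x + p2 x"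
    if e: "e > 0" for e
  proof -
    have eC: "e / Cy > 0" using e Cy(2) by simp
    obtain \<delta> where \<delta>: "\<delta> > 0" and H: "\<And>x. x\<in>ball xb \<delta> \<Longrightarrow> LHS x \<subseteq> RHS x (e / Cy)"
      using Tloc[OF eC] by blast
    have "p1 xb + p2 xb + L (x - xb) - e * norm (x - xb) \<le> p1 x + p2 x" if x: "x \<in> ball xb \<delta>" for x
    proof -
      have "m1 x + m2 x \<in> F x" unfolding F_def using m1i m2i by blast
      then have "m1 x + m2 x + 0 \<in> LHS x" unfolding LHS_def using K0 by blast
      then have "m1 x + m2 x + 0 \<in> RHS x (e / Cy)" by (rule subsetD[OF H[OF x]])
      then obtain b k d where bkd0: "m1 x + m2 x + 0 = b + k + T (x - xb) + d" "b \<in> F xb"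
        "k \<in> K" "norm d \<le> e / Cy * norm (x - xb)"
        unfolding RHS_def by blast
      obtain b1 b2 where b12: "b = b1 + b2" "b1 \<in> F1 xb" "b2 \<in> F2 xb" using bkd0(2) unfolding F_def by blast
      have bkd: "m1 x + m2 x = b1 + b2 + k + T (x - xb) + d" "b1 \<in> F1 xb" "b2 \<in> F2 xb"
        "k \<in> K" "norm d \<le> e / Cy * norm (x - xb)"
        using bkd0 b12 by simp_all
      have "ys (m1 x + m2 x) = ys b1 + ys b2 + ys k + L (x - xb) + ys d"
        unfolding bkd(1) L_def using ysl by (simp add: linear_add)
      moreover have "ys (m1 x + m2 x) = p1 x + p2 x" unfolding p1_def p2_def using ysl by (simp add: linear_add)
      moreover have "p1 xb \<le> ys b1" unfolding p1_def using m1m[OF bkd(2)] .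
      moreover have "p2 xb \<le> ys b2" unfolding p2_def using m2m[OF bkd(3)] .
      moreover have "ys k \<ge> 0" using pos bkd(4) by blast
      moreover have "- (e * norm (x - xb)) \<le> ys d"
      proof -
        have "norm (ys d) \<le> norm d * Cy" by (rule Cy(1))
        also have "\<dots> \<le> (e / Cy * norm (x - xb)) * Cy" using bkd(5) Cy(2) by (intro mult_right_mono) auto
        also have "\<dots> = e * norm (x - xb)" using Cy(2) by simp
        finally show ?thesis by (simp add: abs_le_iff)
      qed
      ultimately show ?thesis by linarith
    qed
    then show ?thesis using \<delta> by blast
  qed
  have glob: "p1 xb + p2 xb + L (x - xb) \<le> p1 x + p2 x" for x
  proof (cases "x = xb")
    case True then show ?thesis using linear_0[OF Ll] by simp
  next
    case False
    define D where "D = norm (x - xb)"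
    have D: "D > 0" using False unfolding D_def by simp
    show ?thesis
    proof (rule field_le_epsilon)
      fix e :: real assume e: "e > 0"
      have eD: "e / D > 0" using e D by simp
      obtain \<delta> where \<delta>: "\<delta> > 0" and H: "\<And>z. z \<in> ball xb \<delta> \<Longrightarrow> p1 xb + p2 xb + L (z - xb) - e / D * norm (z - xb) \<le> p1 z + p2 z"
        using loc[OF eD] by blast
      define s where "s = min 1 (\<delta> / (2 * (D + 1)))"
      have s: "0 < s" "s \<le> 1" unfolding s_def using \<delta> D by auto
      have sD: "s * D < \<delta>"
      proof -
        have "s * D \<le> (\<delta> / (2 * (D + 1))) * D" unfolding s_def using D by (intro mult_right_mono) auto
        also have "\<dots> < \<delta>" using \<delta> D by (simp add: field_simps add_pos_pos)
        finally show ?thesis .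
      qed
      define z where "z = s *\<^sub>R x + (1 - s) *\<^sub>R xb"
      have zx: "z - xb = s *\<^sub>R (x - xb)" unfolding z_def by (simp add: algebra_simps)
      have nz: "norm (z - xb) = s * D" unfolding zx D_def using s by simp
      have zb: "z \<in> ball xb \<delta>" using nz sD by (simp add: dist_norm norm_minus_commute)
      have Lz: "L (z - xb) = s * L (x - xb)" unfolding zx using Ll by (simp add: linear_scale)
      have "p1 xb + p2 xb + s * L (x - xb) - e * s \<le> p1 z + p2 z"
        using H[OF zb] unfolding Lz nz using D by simp
      also have "p1 z + p2 z \<le> s * (p1 x + p2 x) + (1 - s) * (p1 xb + p2 xb)"
        using cvxD[OF c1, of s x xb] cvxD[OF c2, of s x xb] s unfolding z_def by (simp add: algebra_simps)
      finally have "s * (p1 xb + p2 xb + L (x - xb)) \<le> s * (p1 x + p2 x + e)" by (simp add: algebra_simps)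
      then show "p1 xb + p2 xb + L (x - xb) \<le> p1 x + p2 x + e" using s(1) by (simp add: mult_le_cancel_left_pos)
    qed
  qed
  define f where "f y = p1 (xb + y) - p1 xb - L y" for y
  define g where "g y = p2 (xb + y) - p2 xb - (\<lambda>x. 0::real) y" for y
  have cf: "cvx f" unfolding f_def by (rule cvx_shift[OF c1 Ll])
  have cg: "cvx g" unfolding g_def by (rule cvx_shift[OF c2 bounded_linear.linear[OF bounded_linear_zero]])
  have f0: "f 0 = 0" unfolding f_def using linear_0[OF Ll] by simp
  have g0: "g 0 = 0" unfolding g_def by simp
  have fg: "f y + g y \<ge> 0" for y using glob[of "xb + y"] unfolding f_def g_def by simp
  obtain CL where CL: "\<And>x. norm (L x) \<le> norm x * CL" "CL > 0"
    using bounded_linear.pos_bounded[OF Lb] by blast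
  have bnd: "(\<exists>z r B. r > 0 \<and> (\<forall>x\<in>ball z r. f x \<le> B)) \<or> (\<exists>z r B. r > 0 \<and> (\<forall>x\<in>ball z r. g x \<le> B))
              \<or> (\<exists>B::'a set. finite B \<and> span B = UNIV)"
    using reg
  proof (elim disjE exE)
    fix x0 assume "sv_continuous_at F1 x0"
    then have lc: "lower_continuous_at F1 x0" unfolding sv_continuous_at_def by blast
    obtain r B where r: "r > 0" and B: "\<And>x. x \<in> ball x0 r \<Longrightarrow> ys (m1 x) \<le> B"
      using lsc_bound[where F=F1 and m=m1, OF lc ys m1m] ne1 by blast
    have "f y \<le> B - p1 xb + CL * (norm (x0 - xb) + r)" if y: "y \<in> ball (x0 - xb) r" for y
    proof -
      have "xb + y \<in> ball x0 r" using y by (simp add: dist_norm algebra_simps)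
      then have "p1 (xb + y) \<le> B" unfolding p1_def using B by blast
      moreover have "- L y \<le> CL * (norm (x0 - xb) + r)"
      proof -
        have "norm y \<le> norm (x0 - xb) + norm (y - (x0 - xb))" using norm_triangle_sub[of y "x0 - xb"] by simp
        also have "norm (y - (x0 - xb)) < r" using y by (simp add: dist_norm norm_minus_commute)
        finally have "norm y \<le> norm (x0 - xb) + r" by simp
        then have "norm y * CL \<le> (norm (x0 - xb) + r) * CL" using CL(2) by (intro mult_right_mono) auto
        moreover have "- L y \<le> norm (L y)" by simp
        ultimately show ?thesis using CL(1)[of y] by (simp add: mult.commute)
      qed
      ultimately show ?thesis unfolding f_def by linarith
    qed
    then show ?thesis using r by blast
  next
    fix x0 assume "sv_continuous_at F2 x0"
    then have lc: "lower_continuous_at F2 x0" unfolding sv_continuous_at_def by blast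
    obtain r B where r: "r > 0" and B: "\<And>x. x \<in> ball x0 r \<Longrightarrow> ys (m2 x) \<le> B"
      using lsc_bound[where F=F2 and m=m2, OF lc ys m2m] ne2 by blast
    have "g y \<le> B - p2 xb" if y: "y \<in> ball (x0 - xb) r" for y
    proof -
      have "xb + y \<in> ball x0 r" using y by (simp add: dist_norm algebra_simps)
      then have "p2 (xb + y) \<le> B" unfolding p2_def using B by blast
      then show ?thesis unfolding g_def by simp
    qed
    then show ?thesis using r by blast
  next
    assume "finite_dim_space TYPE('a)"
    then show ?thesis unfolding finite_dim_space_def by blast
  qed
  obtain l where lb: "bounded_linear l" and lg: "\<And>x. l x \<le> g x" and lf: "\<And>x. - f x \<le> l x"
    using sandwich[OF cf cg f0 g0 fg bnd] by blast
  define T1 where "T1 x = L x - l x" for x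
  have T1b: "bounded_linear T1" unfolding T1_def using bounded_linear_sub[OF Lb lb] .
  have "T1 \<in> subdiff {0..} (scal_comp ys F1) xb"
  proof (rule subdiff_real_intro[OF T1b])
    show "p1 xb \<in> scal_comp ys F1 xb" unfolding scal_comp_def p1_def using m1i by blast
  next
    fix x a assume "a \<in> scal_comp ys F1 x"
    then obtain b where b: "b \<in> F1 x" "a = ys b" unfolding scal_comp_def by blast
    have "p1 x \<le> a" unfolding p1_def using m1m[OF b(1)] b(2) by simp
    moreover have "- f (x - xb) \<le> l (x - xb)" by (rule lf)
    ultimately show "p1 xb + T1 (x - xb) \<le> a" unfolding f_def T1_def by simp
  qed
  moreover have "l \<in> subdiff {0..} (scal_comp ys F2) xb"
  proof (rule subdiff_real_intro[OF lb])
    show "p2 xb \<in> scal_comp ys F2 xb" unfolding scal_comp_def p2_def using m2i by blast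
  next
    fix x a assume "a \<in> scal_comp ys F2 x"
    then obtain b where b: "b \<in> F2 x" "a = ys b" unfolding scal_comp_def by blast
    have "p2 x \<le> a" unfolding p2_def using m2m[OF b(1)] b(2) by simp
    moreover have "l (x - xb) \<le> g (x - xb)" by (rule lg)
    ultimately show "p2 xb + l (x - xb) \<le> a" unfolding g_def by simp
  qed
  moreover have "Lf = (\<lambda>x. T1 x + l x)" unfolding LT T1_def L_def by (simp add: fun_eq_iff)
  ultimately show "Lf \<in> {(\<lambda>x. T1 x + T2 x) | T1 T2.
                 T1 \<in> subdiff {0..} (scal_comp ys F1) xb \<and>
                 T2 \<in> subdiff {0..} (scal_comp ys F2) xb}" by blast
qed


end
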